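(* Let $\mathfrak k$ be a non-toral $\mathsf H$-subalgebra of $\mathfrak g$ and $v\in\mathcal W^\Sigma(\mathfrak k)$. Then $|\mathrm{Ric}(\gamma_v(t))|_{\gamma_v(t)}\to+\infty$ as $t\to+\infty$.
   Context: $\mathsf G$ compact Lie group, $\mathsf H\subset\mathsf G$ closed, $M=\mathsf G/\mathsf H$ compact connected, $\mathsf G$ acting almost effectively; $Q$ an $\mathrm{Ad}(\mathsf G)$-invariant inner product on $\mathfrak g$, $\mathfrak m$ the $Q$-orthogonal complement of $\mathfrak h$, $Q_{\mathfrak m}=Q|_{\mathfrak m}$; invariant metrics = $\mathrm{Ad}(\mathsf H)$-invariant inner products on $\mathfrak m$. An $\mathsf H$-subalgebra is an $\mathrm{Ad}(\mathsf H)$-invariant Lie subalgebra $\mathfrak k$ with $\mathfrak h\subsetneq\mathfrak k\subsetneq\mathfrak g$; it is non-toral if $[\mathfrak k,\mathfrak k]\not\subset\mathfrak h$. $\mathscr F^{\mathsf G}$: ordered tuples $\varphi=(\mathfrak m_1,\dots,\mathfrak m_\ell)$ of mutually $Q$-orthogonal $\mathrm{Ad}(\mathsf H)$-irreducible invariant subspaces with $\mathfrak m=\bigoplus\mathfrak m_i$, $I=\{1,\dots,\ell\}$, $\mathfrak m_{I'}=\sum_{i\in I'}\mathfrak m_i$; $[ijk]_\varphi=\sum Q([e_\alpha,e_\beta],e_\gamma)^2$ over $e_\alpha\in\mathfrak m_i,e_\beta\in\mathfrak m_j,e_\gamma\in\mathfrak m_k$ in a $Q$-orthonormal $\varphi$-adapted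 basis. $\Sigma$: $Q_{\mathfrak m}$-symmetric endomorphisms $v$ of $\mathfrak m$ commuting with $\mathrm{Ad}(\mathsf H)|_{\mathfrak m}$, with $\mathrm{tr}\,v=0$, $\mathrm{tr}\,v^2=1$; $\gamma_v(t)=Q_{\mathfrak m}(e^{tv}\cdot,\cdot)$. A good decomposition for $v$ is $\varphi$ with $v|_{\mathfrak m_i}=v_i\mathrm{Id}$; $\hat v_1<\dots<\hat v_{\ell_v}$ are the distinct eigenvalues of $v$ and $I^v_1(\varphi)=\{i:v_i=\hat v_1\}$. $v$ is a submersion direction if for a (equivalently every) good decomposition $\varphi$ and all $(i,j,k)\in I^3$, $[ijk]_\varphi>0$ implies $v_i-v_j-v_k+\hat v_1\le0$. $\mathcal W^\Sigma(\mathfrak k)$ is the set of submersion directions $v$ with $\mathfrak m_{I^v_1(\varphi)}=\mathfrak k\cap\mathfrak m$ for every good decomposition $\varphi$ for $v$. *)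

theory Defs
  imports "HOL-Analysis.Analysis"
begin

text \<open>Algebraic model of a compact homogeneous space G/H.
  The Lie algebra g is real^'n with Q = the standard inner product;
  linear endomorphisms of g are real matrices real^'n^'n.\<close>

primrec matpow :: "real^'n^'n \<Rightarrow> nat \<Rightarrow> real^'n^'n" where
  "matpow A 0 = mat 1"
| "matpow A (Suc k) = A ** matpow A k"

definition mexp :: "real^'n^'n \<Rightarrow> real^'n^'n" where
  "mexp A = (\<Sum>k. (1 / fact k) *\<^sub>R matpow A k)"

definition lie_algebra :: "(real^'n \<Rightarrow> real^'n \<Rightarrow> real^'n) \<Rightarrow> bool" where
  "lie_algebra br \<longleftrightarrow> bilinear br \<and> (\<forall>x. br x x = 0) \<and>
     (\<forall>x y z. br x (br y z) + br y (br z x) + br z (br x y) = 0)"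

text \<open>Ad-invariance of Q (infinitesimal form).\<close>
definition ad_invariant_Q :: "(real^'n \<Rightarrow> real^'n \<Rightarrow> real^'n) \<Rightarrow> bool" where
  "ad_invariant_Q br \<longleftrightarrow> (\<forall>x y z. inner (br x y) z = inner x (br y z))"

definition lie_subalgebra :: "(real^'n \<Rightarrow> real^'n \<Rightarrow> real^'n) \<Rightarrow> (real^'n) set \<Rightarrow> bool" where
  "lie_subalgebra br s \<longleftrightarrow> subspace s \<and> (\<forall>x\<in>s. \<forall>y\<in>s. br x y \<in> s)"

definition lie_ideal :: "(real^'n \<Rightarrow> real^'n \<Rightarrow> real^'n) \<Rightarrow> (real^'n) set \<Rightarrow> bool" where
  "lie_ideal br s \<longleftrightarrow> subspace s \<and> (\<forall>x. \<forall>y\<in>s. br x y \<in> s)"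

text \<open>AdH models the isotropy representation Ad(H) on g: a compact group of
  Q-orthogonal Lie algebra automorphisms of g preserving h, whose Lie algebra is ad(h).\<close>
definition isotropy_rep ::
  "(real^'n \<Rightarrow> real^'n \<Rightarrow> real^'n) \<Rightarrow> (real^'n) set \<Rightarrow> (real^'n^'n) set \<Rightarrow> bool" where
  "isotropy_rep br h AdH \<longleftrightarrow>
     compact AdH \<and> mat 1 \<in> AdH \<and> (\<forall>A\<in>AdH. \<forall>B\<in>AdH. A ** B \<in> AdH) \<and>
     (\<forall>A\<in>AdH. invertible A \<and> matrix_inv A \<in> AdH) \<and>
     (\<forall>A\<in>AdH. orthogonal_matrix A \<and> (\<forall>x y. A *v br x y = br (A *v x) (A *v y)) \<and>
               (\<forall>x\<in>h. A *v x \<in> h)) \<and>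
     {D. \<forall>t::real. mexp (t *\<^sub>R D) \<in> AdH} = {matrix (br X) | X. X \<in> h}"

text \<open>Standing assumptions: g compact Lie algebra with Ad-invariant inner product Q,
  h the Lie algebra of H, almost effective action (h contains no nonzero ideal of g).\<close>
definition homog_setting ::
  "(real^'n \<Rightarrow> real^'n \<Rightarrow> real^'n) \<Rightarrow> (real^'n) set \<Rightarrow> (real^'n^'n) set \<Rightarrow> bool" where
  "homog_setting br h AdH \<longleftrightarrow> lie_algebra br \<and> ad_invariant_Q br \<and> lie_subalgebra br h \<and>
     (\<forall>I. lie_ideal br I \<and> I \<subseteq> h \<longrightarrow> I = {0}) \<and> isotropy_rep br h AdH"

definition mspace :: "(real^'n) set \<Rightarrow> (real^'n) set" where
  "mspace h = orthogonal_comp h"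

definition adh_invariant :: "(real^'n^'n) set \<Rightarrow> (real^'n) set \<Rightarrow> bool" where
  "adh_invariant AdH S \<longleftrightarrow> (\<forall>A\<in>AdH. \<forall>x\<in>S. A *v x \<in> S)"

definition h_subalgebra ::
  "(real^'n \<Rightarrow> real^'n \<Rightarrow> real^'n) \<Rightarrow> (real^'n) set \<Rightarrow> (real^'n^'n) set \<Rightarrow> (real^'n) set \<Rightarrow> bool" where
  "h_subalgebra br h AdH k \<longleftrightarrow> lie_subalgebra br k \<and> adh_invariant AdH k \<and> h \<subset> k \<and> k \<subset> UNIV"

definition non_toral :: "(real^'n \<Rightarrow> real^'n \<Rightarrow> real^'n) \<Rightarrow> (real^'n) set \<Rightarrow> (real^'n) set \<Rightarrow> bool" where
  "non_toral br h k \<longleftrightarrow> \<not> (\<forall>x\<in>k. \<forall>y\<in>k. br x y \<in> h)"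

definition adh_irreducible :: "(real^'n^'n) set \<Rightarrow> (real^'n) set \<Rightarrow> bool" where
  "adh_irreducible AdH S \<longleftrightarrow> subspace S \<and> S \<noteq> {0} \<and> adh_invariant AdH S \<and>
     (\<forall>W. subspace W \<and> W \<subseteq> S \<and> adh_invariant AdH W \<longrightarrow> W = {0} \<or> W = S)"

text \<open>Elements of F^G: ordered tuples (lists) of mutually Q-orthogonal Ad(H)-irreducible
  subspaces summing to m.\<close>
definition decomposition :: "(real^'n) set \<Rightarrow> (real^'n^'n) set \<Rightarrow> (real^'n) set list \<Rightarrow> bool" where
  "decomposition h AdH \<phi> \<longleftrightarrow> (\<forall>S\<in>set \<phi>. adh_irreducible AdH S) \<and>
     (\<forall>i<length \<phi>. \<forall>j<length \<phi>. i \<noteq> j \<longrightarrow> (\<forall>x\<in>\<phi>!i. \<forall>y\<in>\<phi>!j. inner x y = 0)) \<and>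
     span (\<Union>(set \<phi>)) = mspace h"

definition onb :: "(real^'n) set \<Rightarrow> (real^'n) set \<Rightarrow> bool" where
  "onb S B \<longleftrightarrow> B \<subseteq> S \<and> span B = S \<and> (\<forall>b\<in>B. norm b = 1) \<and> pairwise orthogonal B"

text \<open>The structure constants [ijk]_phi (indices are 0-based list positions).\<close>
definition bracket_coef ::
  "(real^'n \<Rightarrow> real^'n \<Rightarrow> real^'n) \<Rightarrow> (real^'n) set list \<Rightarrow> nat \<Rightarrow> nat \<Rightarrow> nat \<Rightarrow> real" where
  "bracket_coef br \<phi> i j k =
     (let Bi = (SOME B. onb (\<phi>!i) B); Bj = (SOME B. onb (\<phi>!j) B); Bk = (SOME B. onb (\<phi>!k) B)
      in (\<Sum>a\<in>Bi. \<Sum>b\<in>Bj. \<Sum>c\<in>Bk. (inner (br a b) c)\<^sup>2))"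

text \<open>Sigma: an endomorphism v of m is represented by the matrix V that agrees with v on m
  and vanishes on h.\<close>
definition SigmaSet :: "(real^'n) set \<Rightarrow> (real^'n^'n) set \<Rightarrow> (real^'n^'n) set" where
  "SigmaSet h AdH = {V. (\<forall>x\<in>h. V *v x = 0) \<and> (\<forall>x\<in>mspace h. V *v x \<in> mspace h) \<and>
     transpose V = V \<and> (\<forall>A\<in>AdH. A ** V = V ** A) \<and> trace V = 0 \<and> trace (V ** V) = 1}"

definition vcoef :: "real^'n^'n \<Rightarrow> (real^'n) set \<Rightarrow> real" where
  "vcoef V S = (SOME c. \<forall>x\<in>S. V *v x = c *\<^sub>R x)"

definition good_decomp :: "(real^'n) set \<Rightarrow> (real^'n^'n) set \<Rightarrow> real^'n^'n \<Rightarrow> (real^'n) set list \<Rightarrow> bool" where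
  "good_decomp h AdH V \<phi> \<longleftrightarrow> decomposition h AdH \<phi> \<and>
     (\<forall>i<length \<phi>. \<exists>c. \<forall>x\<in>\<phi>!i. V *v x = c *\<^sub>R x)"

definition vhat1 :: "(real^'n) set \<Rightarrow> real^'n^'n \<Rightarrow> real" where
  "vhat1 h V = Min {c. \<exists>x\<in>mspace h. x \<noteq> 0 \<and> V *v x = c *\<^sub>R x}"

definition I1 :: "(real^'n) set \<Rightarrow> real^'n^'n \<Rightarrow> (real^'n) set list \<Rightarrow> nat set" where
  "I1 h V \<phi> = {i. i < length \<phi> \<and> vcoef V (\<phi>!i) = vhat1 h V}"

definition submersion_dir ::
  "(real^'n \<Rightarrow> real^'n \<Rightarrow> real^'n) \<Rightarrow> (real^'n) set \<Rightarrow> (real^'n^'n) set \<Rightarrow> real^'n^'n \<Rightarrow> bool" where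
  "submersion_dir br h AdH V \<longleftrightarrow> (\<exists>\<phi>. good_decomp h AdH V \<phi> \<and>
     (\<forall>i<length \<phi>. \<forall>j<length \<phi>. \<forall>k<length \<phi>. bracket_coef br \<phi> i j k > 0 \<longrightarrow>
        vcoef V (\<phi>!i) - vcoef V (\<phi>!j) - vcoef V (\<phi>!k) + vhat1 h V \<le> 0))"

definition W_Sigma ::
  "(real^'n \<Rightarrow> real^'n \<Rightarrow> real^'n) \<Rightarrow> (real^'n) set \<Rightarrow> (real^'n^'n) set \<Rightarrow> (real^'n) set \<Rightarrow> (real^'n^'n) set" where
  "W_Sigma br h AdH k = {V. V \<in> SigmaSet h AdH \<and> submersion_dir br h AdH V \<and>
     (\<forall>\<phi>. good_decomp h AdH V \<phi> \<longrightarrow> span (\<Union>i\<in>I1 h V \<phi>. \<phi>!i) = k \<inter> mspace h)}"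

text \<open>Invariant metrics are given as bilinear forms g on m.  Ricci tensor via the
  standard algebraic formula for G-invariant metrics on reductive homogeneous spaces of a
  unimodular (here compact) group (Besse, Einstein Manifolds, Cor. 7.38, polarized).\<close>

definition projm :: "(real^'n) set \<Rightarrow> real^'n \<Rightarrow> real^'n" where
  "projm h x = (THE y. y \<in> mspace h \<and> x - y \<in> h)"

definition killing :: "(real^'n \<Rightarrow> real^'n \<Rightarrow> real^'n) \<Rightarrow> real^'n \<Rightarrow> real^'n \<Rightarrow> real" where
  "killing br X Y = trace (matrix (br X) ** matrix (br Y))"

definition gonb :: "(real^'n) set \<Rightarrow> (real^'n \<Rightarrow> real^'n \<Rightarrow> real) \<Rightarrow> (real^'n) set \<Rightarrow> bool" where
  "gonb h g B \<longleftrightarrow> B \<subseteq> mspace h \<and> span B = mspace h \<and> (\<forall>b\<in>B. g b b = 1) \<and>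
     (\<forall>b\<in>B. \<forall>c\<in>B. b \<noteq> c \<longrightarrow> g b c = 0)"

definition ricci ::
  "(real^'n \<Rightarrow> real^'n \<Rightarrow> real^'n) \<Rightarrow> (real^'n) set \<Rightarrow> (real^'n \<Rightarrow> real^'n \<Rightarrow> real) \<Rightarrow> real^'n \<Rightarrow> real^'n \<Rightarrow> real" where
  "ricci br h g X Y = (let B = (SOME B. gonb h g B) in
      - (1/2) * (\<Sum>b\<in>B. g (projm h (br X b)) (projm h (br Y b)))
      - (1/2) * killing br X Y
      + (1/4) * (\<Sum>b\<in>B. \<Sum>c\<in>B. g (projm h (br b c)) X * g (projm h (br b c)) Y))"

definition ric_norm ::
  "(real^'n \<Rightarrow> real^'n \<Rightarrow> real^'n) \<Rightarrow> (real^'n) set \<Rightarrow> (real^'n \<Rightarrow> real^'n \<Rightarrow> real) \<Rightarrow> real" where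
  "ric_norm br h g = (let B = (SOME B. gonb h g B) in
      sqrt (\<Sum>b\<in>B. \<Sum>c\<in>B. (ricci br h g b c)\<^sup>2))"

text \<open>gamma_v(t) = Q(e^{tv} . , .) on m.\<close>
definition gamma :: "real^'n^'n \<Rightarrow> real \<Rightarrow> real^'n \<Rightarrow> real^'n \<Rightarrow> real" where
  "gamma V t x y = inner (mexp (t *\<^sub>R V) *v x) y"

end

theory Submission
  imports Defs
begin

lemma lin_sum_scale:
  assumes "linear f" "finite B"
  shows "f (\<Sum>b\<in>B. u b *\<^sub>R b) = (\<Sum>b\<in>B. u b *\<^sub>R f b)"
  using assms by (simp add: linear_sum linear_scale)

lemma onb_expand:
  fixes g :: "'a::real_vector \<Rightarrow> 'a \<Rightarrow> real"
  assumes lg: "\<And>y. linear (\<lambda>x. g x y)"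
    and B: "finite B" "x \<in> span B" "\<And>b c. b\<in>B \<Longrightarrow> c\<in>B \<Longrightarrow> g b c = (if b = c then 1 else 0)"
  shows "x = (\<Sum>b\<in>B. g x b *\<^sub>R b)"
proof -
  obtain u where u: "x = (\<Sum>b\<in>B. u b *\<^sub>R b)" using B(2) span_finite[OF B(1)] by auto
  have "g x c = u c" if "c \<in> B" for c
  proof -
    have "g x c = (\<Sum>b\<in>B. u b * g b c)"
      using lin_sum_scale[OF lg[of c] B(1), of u] u by simp
    also have "\<dots> = (\<Sum>b\<in>B. if b = c then u b else 0)"
      by (rule sum.cong) (use B(3) that in auto)
    also have "\<dots> = u c" using B(1) that by simp
    finally show ?thesis .
  qed
  then show ?thesis using u by (metis (no_types, lifting) sum.cong)
qed

lemma onb_trace_invariant: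
  fixes g \<beta> :: "'a::real_vector \<Rightarrow> 'a \<Rightarrow> real"
  assumes lg: "\<And>y. linear (\<lambda>x. g x y)" and sym: "\<And>x y. x\<in>S \<Longrightarrow> y\<in>S \<Longrightarrow> g x y = g y x"
    and lb1: "\<And>y. linear (\<lambda>x. \<beta> x y)" and lb2: "\<And>x. linear (\<beta> x)"
    and B: "finite B" "B \<subseteq> S" "S \<subseteq> span B" "\<And>b c. b\<in>B \<Longrightarrow> c\<in>B \<Longrightarrow> g b c = (if b = c then 1 else 0)"
    and B': "finite B'" "B' \<subseteq> S" "S \<subseteq> span B'" "\<And>b c. b\<in>B' \<Longrightarrow> c\<in>B' \<Longrightarrow> g b c = (if b = c then 1 else 0)"
  shows "(\<Sum>b\<in>B'. \<beta> b b) = (\<Sum>b\<in>B. \<beta> b b)"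
proof -
  have ex: "x = (\<Sum>b\<in>B. g x b *\<^sub>R b)" if "x \<in> S" for x
    using onb_expand[OF lg B(1) _ B(4)] B(3) that by blast
  have ex': "x = (\<Sum>b\<in>B'. g x b *\<^sub>R b)" if "x \<in> S" for x
    using onb_expand[OF lg B'(1) _ B'(4)] B'(3) that by blast
  have bb: "\<beta> x x = (\<Sum>b\<in>B. \<Sum>c\<in>B. g x b * g x c * \<beta> b c)" if "x \<in> S" for x
  proof -
    have "\<beta> x x = \<beta> (\<Sum>b\<in>B. g x b *\<^sub>R b) (\<Sum>c\<in>B. g x c *\<^sub>R c)"
      using ex[OF that] by simp
    also have "\<dots> = (\<Sum>b\<in>B. g x b * \<beta> b (\<Sum>c\<in>B. g x c *\<^sub>R c))"
      using lin_sum_scale[OF lb1 B(1)] by simp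
    also have "\<dots> = (\<Sum>b\<in>B. g x b * (\<Sum>c\<in>B. g x c * \<beta> b c))"
      using lin_sum_scale[OF lb2 B(1)] by simp
    also have "\<dots> = (\<Sum>b\<in>B. \<Sum>c\<in>B. g x b * g x c * \<beta> b c)"
      by (simp add: sum_distrib_left mult.assoc)
    finally show ?thesis .
  qed
  have gg: "(\<Sum>x\<in>B'. g x b * g x c) = g b c" if "b \<in> B" "c \<in> B" for b c
  proof -
    have bS: "b \<in> S" "c \<in> S" using B(2) that by auto
    have "g b c = g (\<Sum>x\<in>B'. g b x *\<^sub>R x) c" using ex'[OF bS(1)] by simp
    also have "\<dots> = (\<Sum>x\<in>B'. g b x * g x c)" using lin_sum_scale[OF lg B'(1)] by simp
    also have "\<dots> = (\<Sum>x\<in>B'. g x b * g x c)"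
      by (rule sum.cong) (use sym bS B'(2) in auto)
    finally show ?thesis by simp
  qed
  have "(\<Sum>x\<in>B'. \<beta> x x) = (\<Sum>x\<in>B'. \<Sum>b\<in>B. \<Sum>c\<in>B. g x b * g x c * \<beta> b c)"
    by (rule sum.cong) (use bb B'(2) in auto)
  also have "\<dots> = (\<Sum>b\<in>B. \<Sum>c\<in>B. \<Sum>x\<in>B'. g x b * g x c * \<beta> b c)"
    by (subst sum.swap) (simp add: sum.swap[of _ B'])
  also have "\<dots> = (\<Sum>b\<in>B. \<Sum>c\<in>B. g b c * \<beta> b c)"
    by (simp add: sum_distrib_right[symmetric] gg)
  also have "\<dots> = (\<Sum>b\<in>B. \<beta> b b)"
  proof (rule sum.cong[OF refl])
    fix b assume "b \<in> B"
    have "(\<Sum>c\<in>B. g b c * \<beta> b c) = (\<Sum>c\<in>B. if b = c then \<beta> b c else 0)"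
      by (rule sum.cong) (use B(4) \<open>b\<in>B\<close> in auto)
    then show "(\<Sum>c\<in>B. g b c * \<beta> b c) = \<beta> b b" using B(1) \<open>b\<in>B\<close> by simp
  qed
  finally show ?thesis .
qed


lemma matpow_entry_bound:
  fixes A :: "real^'n^'n"
  shows "\<bar>matpow A k $ i $ j\<bar> \<le> (real CARD('n) * norm A)^k"
proof (induction k arbitrary: i j)
  case 0
  then show ?case by (simp add: mat_def)
next
  case (Suc k)
  have "\<bar>(A ** matpow A k) $ i $ j\<bar> = \<bar>\<Sum>l\<in>UNIV. A$i$l * matpow A k $l$j\<bar>"
    by (simp add: matrix_matrix_mult_def)
  also have "\<dots> \<le> (\<Sum>l\<in>UNIV. \<bar>A$i$l\<bar> * \<bar>matpow A k $l$j\<bar>)"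
    by (metis (no_types, lifting) abs_mult sum.cong sum_abs)
  also have "\<dots> \<le> (\<Sum>l\<in>(UNIV::'n set). norm A * (real CARD('n) * norm A)^k)"
  proof (rule sum_mono)
    fix l
    have "\<bar>A$i$l\<bar> \<le> norm A"
      using component_le_norm_cart[of "A$i" l] Finite_Cartesian_Product.norm_nth_le[of A i] by linarith
    then show "\<bar>A$i$l\<bar> * \<bar>matpow A k $l$j\<bar> \<le> norm A * (real CARD('n) * norm A)^k"
      by (simp add: Suc.IH mult_mono')
  qed
  also have "\<dots> = (real CARD('n) * norm A)^(Suc k)" by simp
  finally show ?case by simp
qed

lemma norm_mat_le:
  fixes M :: "real^'n^'n"
  shows "norm M \<le> (\<Sum>i\<in>UNIV. \<Sum>j\<in>UNIV. \<bar>M$i$j\<bar>)"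
proof -
  have "norm M \<le> (\<Sum>i\<in>UNIV. norm (M$i))"
    unfolding norm_vec_def by (rule L2_set_le_sum) auto
  also have "\<dots> \<le> (\<Sum>i\<in>UNIV. \<Sum>j\<in>UNIV. \<bar>M$i$j\<bar>)"
    by (rule sum_mono) (rule norm_le_l1_cart)
  finally show ?thesis .
qed

lemma mexp_summable:
  fixes A :: "real^'n^'n"
  shows "summable (\<lambda>k. (1 / fact k) *\<^sub>R matpow A k)"
proof (rule summable_comparison_test')
  let ?C = "real CARD('n) * norm A"
  show "summable (\<lambda>k. real CARD('n) ^ 2 * (inverse (fact k) * ?C ^ k))"
    by (rule summable_mult) (rule summable_exp)
  fix k :: nat
  have "norm (matpow A k) \<le> (\<Sum>i\<in>(UNIV::'n set). \<Sum>j\<in>(UNIV::'n set). ?C ^ k)"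
    using norm_mat_le[of "matpow A k"] matpow_entry_bound[of A k]
    by (meson order_trans sum_mono)
  also have "\<dots> = real CARD('n) ^ 2 * ?C ^ k" by (simp add: power2_eq_square)
  finally have "norm (matpow A k) \<le> real CARD('n) ^ 2 * ?C ^ k" .
  then show "norm ((1 / fact k) *\<^sub>R matpow A k) \<le> real CARD('n) ^ 2 * (inverse (fact k) * ?C ^ k)"
    by (simp add: divide_simps mult.commute mult.left_commute)
qed

lemma matpow_eigen:
  fixes A :: "real^'n^'n"
  assumes "A *v x = c *\<^sub>R x"
  shows "matpow A k *v x = (c ^ k) *\<^sub>R x"
proof (induction k)
  case (Suc k)
  have "matpow A (Suc k) *v x = A *v (matpow A k *v x)"
    by (simp add: matrix_vector_mul_assoc)
  also have "\<dots> = (c^k) *\<^sub>R (A *v x)" using Suc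
    by (simp add: linear_scale[OF matrix_vector_mul_linear])
  finally show ?case by (simp add: assms)
qed simp

lemma bl_mv: "bounded_linear (\<lambda>M::real^'n^'n. M *v x)"
proof -
  have "linear (\<lambda>M::real^'n^'n. M *v x)"
    by (rule linearI) (simp_all add: vec_eq_iff matrix_vector_mult_def sum.distrib sum_distrib_left algebra_simps)
  then show ?thesis by (simp add: linear_conv_bounded_linear)
qed

lemma mexp_eigen:
  fixes V :: "real^'n^'n"
  assumes "V *v x = c *\<^sub>R x"
  shows "mexp (t *\<^sub>R V) *v x = exp (t * c) *\<^sub>R x"
proof -
  have e: "(t *\<^sub>R V) *v x = (t*c) *\<^sub>R x"
    by (simp add: scaleR_matrix_vector_assoc[symmetric] assms)
  have "mexp (t *\<^sub>R V) *v x = (\<Sum>k. ((1 / fact k) *\<^sub>R matpow (t *\<^sub>R V) k) *v x)"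
    unfolding mexp_def by (rule bounded_linear.suminf[OF bl_mv mexp_summable])
  also have "\<dots> = (\<Sum>k. ((t*c)^k / fact k) *\<^sub>R x)"
    by (simp add: scaleR_matrix_vector_assoc[symmetric] matpow_eigen[OF e])
  also have "\<dots> = (\<Sum>k. (t*c)^k / fact k) *\<^sub>R x"
    by (rule suminf_scaleR_left[symmetric]) (use summable_exp[of "t*c"] in \<open>simp add: field_simps\<close>)
  also have "(\<Sum>k. (t*c)^k / fact k) = exp (t*c)"
    by (simp add: exp_def divide_inverse mult.commute)
  finally show ?thesis .
qed


lemma lin_cmul: "linear (f::'a::real_vector\<Rightarrow>real) \<Longrightarrow> linear (\<lambda>x. c * f x)"
  using real_vector.linear_compose_scale_right[of f c] by simp
lemma lin_mulc: "linear (f::'a::real_vector\<Rightarrow>real) \<Longrightarrow> linear (\<lambda>x. f x * c)"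
  using real_vector.linear_compose_scale_right[of f c] by (simp add: mult.commute)
lemma lin_inner_left: "linear (\<lambda>x. inner x y)"
  by (rule bounded_linear.linear) (rule bounded_linear_inner_left)
lemma lin_inner_right: "linear (\<lambda>x. inner y x)"
  by (rule bounded_linear.linear) (rule bounded_linear_inner_right)
lemma lin_comp: "linear f \<Longrightarrow> linear g \<Longrightarrow> linear (\<lambda>x. g (f x))"
  using linear_compose[of f g] by (simp add: o_def)
lemma lin_prod: "linear (f::'a::real_vector\<Rightarrow>real) \<Longrightarrow> linear (\<lambda>x. c * f x * d)"
  using lin_cmul[of f "c*d"] by (simp add: mult_ac)

lemma inner_mv_transpose:
  fixes A :: "real^'n^'n"
  shows "inner (A *v x) y = inner x (transpose A *v y)"
proof -
  have "inner (A *v x) y = (\<Sum>i\<in>UNIV. \<Sum>j\<in>UNIV. A$i$j * x$j * y$i)"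
    by (simp add: inner_vec_def matrix_vector_mult_def sum_distrib_right)
  also have "\<dots> = (\<Sum>j\<in>UNIV. \<Sum>i\<in>UNIV. A$i$j * x$j * y$i)"
    by (rule sum.swap)
  also have "\<dots> = inner x (transpose A *v y)"
    by (simp add: inner_vec_def matrix_vector_mult_def transpose_def sum_distrib_left mult_ac)
  finally show ?thesis .
qed

lemma aux_ineq: "(X::real) \<le> NE \<Longrightarrow> (SF::real) \<le> T \<Longrightarrow>
   1/2*(Nh::real) + 1/4*SF \<le> -(1/2)*X - 1/2 * -(Nh + NE) + 1/4*T"
proof -
  assume "X \<le> NE" "SF \<le> T"
  moreover have "-(1/2)*X - 1/2 * -(Nh + NE) + 1/4*T = -X/2 + Nh/2 + NE/2 + T/4" by (simp add: field_simps)
  ultimately show ?thesis by linarith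
qed

locale setting =
  fixes br :: "real^'n \<Rightarrow> real^'n \<Rightarrow> real^'n" and h :: "(real^'n) set"
    and V :: "real^'n^'n" and lam :: "real^'n \<Rightarrow> real"
    and E Eh EF :: "(real^'n) set" and \<mu> :: real
  assumes bil: "bilinear br" and alt: "\<And>x. br x x = 0" and adinv: "ad_invariant_Q br"
    and hsub: "subspace h"
    and Efin: "finite E" and Em: "E \<subseteq> mspace h" and Espan: "span E = mspace h"
    and Eon: "\<And>e f. e\<in>E \<Longrightarrow> f\<in>E \<Longrightarrow> inner e f = (if e = f then 1 else 0)"
    and Eeig: "\<And>e. e\<in>E \<Longrightarrow> V *v e = lam e *\<^sub>R e"
    and Ehfin: "finite Eh" and Ehh: "Eh \<subseteq> h" and Ehspan: "span Eh = h"
    and Ehon: "\<And>e f. e\<in>Eh \<Longrightarrow> f\<in>Eh \<Longrightarrow> inner e f = (if e = f then 1 else 0)"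
    and EFE: "EF \<subseteq> E" and EFmu: "\<And>e. e \<in> EF \<Longrightarrow> lam e = \<mu>"
    and SDE: "\<And>a b c. a\<in>E \<Longrightarrow> b\<in>E \<Longrightarrow> c\<in>E \<Longrightarrow> inner (br a b) c \<noteq> 0 \<Longrightarrow>
               lam a - lam b - lam c + \<mu> \<le> 0"
begin

abbreviation "m \<equiv> mspace h"
abbreviation "P \<equiv> projm h"

lemma linL: "linear (\<lambda>x. br x y)" using bil by (simp add: bilinear_def)
lemma linR: "linear (br x)" using bil by (simp add: bilinear_def)

lemma br_anti: "br y x = - br x y"
proof -
  have "br (x+y) (x+y) = br x x + br x y + br y x + br y y"
    by (simp add: linear_add[OF linL] linear_add[OF linR])
  then show ?thesis using alt by (simp add: add_eq_0_iff add.commute)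
qed

lemma cyc: "inner (br x y) z = inner x (br y z)"
  using adinv by (simp add: ad_invariant_Q_def)

lemma skew: "inner (br x y) z = - inner y (br x z)"
  using cyc[of y x z] br_anti[of y x] by simp

lemma msub: "subspace m" by (simp add: mspace_def subspace_orthogonal_comp)

lemma hm_orth: "x \<in> h \<Longrightarrow> y \<in> m \<Longrightarrow> inner x y = 0"
  by (simp add: mspace_def orthogonal_comp_def orthogonal_def)

lemma hm_int: "x \<in> h \<Longrightarrow> x \<in> m \<Longrightarrow> x = 0"
  using hm_orth by fastforce

lemma decomp_ex: "\<exists>y. y \<in> m \<and> x - y \<in> h"
proof -
  obtain y z where y: "y \<in> span h" and z: "\<And>w. w \<in> span h \<Longrightarrow> orthogonal z w" and "x = y + z"
    using orthogonal_subspace_decomp_exists[of h x] by metis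
  have "z \<in> m" using z span_base[of _ h] by (auto simp: mspace_def orthogonal_comp_def orthogonal_commute)
  have sh: "span h = h" using hsub by (simp add: span_eq_iff)
  have "x - z \<in> h" using y \<open>x = y + z\<close> sh by simp
  moreover note \<open>z \<in> m\<close>
  ultimately show ?thesis by blast
qed

lemma decomp_uniq: "y \<in> m \<Longrightarrow> x - y \<in> h \<Longrightarrow> y' \<in> m \<Longrightarrow> x - y' \<in> h \<Longrightarrow> y = y'"
proof -
  assume a: "y \<in> m" "x - y \<in> h" "y' \<in> m" "x - y' \<in> h"
  have "y - y' \<in> m" using a msub by (simp add: subspace_diff)
  moreover have "y - y' \<in> h" using subspace_diff[OF hsub a(4) a(2)] by simp
  ultimately show ?thesis using hm_int by fastforce
qed

lemma P_char: "P x \<in> m \<and> x - P x \<in> h"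
proof -
  obtain y where yy: "y \<in> m \<and> x - y \<in> h" using decomp_ex by blast
  then show ?thesis unfolding projm_def
  proof (rule theI)
    fix z assume "z \<in> m \<and> x - z \<in> h"
    then show "z = y" using decomp_uniq yy by blast
  qed
qed

lemma P_eq: "y \<in> m \<Longrightarrow> x - y \<in> h \<Longrightarrow> P x = y"
  using P_char decomp_uniq by blast

lemma Pm: "P x \<in> m" using P_char by blast
lemma Ph: "x - P x \<in> h" using P_char by blast
lemma P_id: "x \<in> m \<Longrightarrow> P x = x" by (rule P_eq) (auto simp: hsub subspace_0)
lemma P_inner: "f \<in> m \<Longrightarrow> inner (P x) f = inner x f"
proof -
  assume f: "f \<in> m"
  have "inner (x - P x) f = 0" using hm_orth[OF Ph f] .
  then show ?thesis by (simp add: inner_diff_left)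
qed

lemma linP: "linear P"
proof (rule linearI)
  fix x y
  show "P (x + y) = P x + P y"
  proof (rule P_eq)
    show "P x + P y \<in> m" using Pm msub by (simp add: subspace_add)
    have "x + y - (P x + P y) = (x - P x) + (y - P y)" by simp
    then show "x + y - (P x + P y) \<in> h" using Ph hsub by (metis subspace_add)
  qed
next
  fix c x
  show "P (c *\<^sub>R x) = c *\<^sub>R P x"
  proof (rule P_eq)
    show "c *\<^sub>R P x \<in> m" using Pm msub by (simp add: subspace_scale)
    have "c *\<^sub>R x - c *\<^sub>R P x = c *\<^sub>R (x - P x)" by (simp add: algebra_simps)
    then show "c *\<^sub>R x - c *\<^sub>R P x \<in> h" using Ph hsub by (metis subspace_scale)
  qed
qed

definition "Eg = Eh \<union> E"

lemma Eg_fin: "finite Eg" using Efin Ehfin by (simp add: Eg_def)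

lemma Eg_on: "e\<in>Eg \<Longrightarrow> f\<in>Eg \<Longrightarrow> inner e f = (if e = f then 1 else 0)"
proof -
  assume a: "e \<in> Eg" "f \<in> Eg"
  have mixed: "inner e f = 0 \<and> e \<noteq> f" if "e \<in> Eh" "f \<in> E" for e f
  proof -
    have "e \<in> h" "f \<in> m" using that Ehh Em by auto
    then have "inner e f = 0" by (rule hm_orth)
    moreover have "inner f f = 1" using Eon[OF that(2) that(2)] by simp
    ultimately show ?thesis by auto
  qed
  show ?thesis using a unfolding Eg_def
    using Eon Ehon mixed by (auto simp: inner_commute) (metis inner_commute)
qed

lemma Eg_span: "x \<in> span Eg"
proof -
  have "x - P x \<in> span Eg" using Ph Ehspan span_mono[of Eh Eg] by (auto simp: Eg_def)
  moreover have "P x \<in> span Eg" using Pm Espan span_mono[of E Eg] by (auto simp: Eg_def)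
  ultimately have "(x - P x) + P x \<in> span Eg" by (rule span_add)
  then show ?thesis by simp
qed

lemma Eg_expand: "x = (\<Sum>f\<in>Eg. inner x f *\<^sub>R f)"
  by (rule onb_expand[OF lin_inner_left Eg_fin Eg_span Eg_on])

lemma E_expand: "x \<in> m \<Longrightarrow> x = (\<Sum>f\<in>E. inner x f *\<^sub>R f)"
  by (rule onb_expand[OF lin_inner_left Efin _ Eon]) (simp add: Espan)

lemma parseval: "inner x x = (\<Sum>f\<in>Eg. (inner x f)\<^sup>2)"
proof -
  have "inner x x = inner (\<Sum>f\<in>Eg. inner x f *\<^sub>R f) x" using Eg_expand by simp
  also have "\<dots> = (\<Sum>f\<in>Eg. inner x f * inner f x)" by (simp add: inner_sum_left)
  finally show ?thesis by (simp add: inner_commute power2_eq_square)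
qed

lemma mexp_m: "x \<in> m \<Longrightarrow> mexp (t *\<^sub>R V) *v x = (\<Sum>e\<in>E. (exp (t * lam e) * inner x e) *\<^sub>R e)"
proof -
  assume x: "x \<in> m"
  have "mexp (t *\<^sub>R V) *v x = mexp (t *\<^sub>R V) *v (\<Sum>f\<in>E. inner x f *\<^sub>R f)"
    using E_expand[OF x] by simp
  also have "\<dots> = (\<Sum>f\<in>E. inner x f *\<^sub>R (mexp (t *\<^sub>R V) *v f))"
    by (simp add: lin_sum_scale[OF matrix_vector_mul_linear Efin])
  also have "\<dots> = (\<Sum>e\<in>E. (exp (t * lam e) * inner x e) *\<^sub>R e)"
    by (rule sum.cong) (simp_all add: mexp_eigen[OF Eeig])
  finally show ?thesis .
qed

abbreviation "G t \<equiv> gamma V t"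

lemma G_m: "x \<in> m \<Longrightarrow> G t x y = (\<Sum>e\<in>E. exp (t * lam e) * inner x e * inner e y)"
  by (simp add: gamma_def mexp_m inner_sum_left)

lemma lin_G1: "linear (\<lambda>x. G t x y)"
  unfolding gamma_def by (rule lin_comp[OF matrix_vector_mul_linear lin_inner_left])
lemma lin_G2: "linear (G t x)"
  unfolding gamma_def by (rule lin_inner_right)

lemma G_sym: "x \<in> m \<Longrightarrow> y \<in> m \<Longrightarrow> G t x y = G t y x"
  by (simp add: G_m inner_commute mult_ac)

lemma G_eig: "x \<in> m \<Longrightarrow> e \<in> E \<Longrightarrow> G t x e = exp (t * lam e) * inner x e"
proof -
  assume x: "x \<in> m" and e: "e \<in> E"
  have "G t x e = (\<Sum>f\<in>E. if f = e then exp (t * lam f) * inner x f else 0)"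
    unfolding G_m[OF x] by (rule sum.cong) (use Eon e in auto)
  then show ?thesis using Efin e by simp
qed

lemma gonb_on: "gonb h g B \<Longrightarrow> b \<in> B \<Longrightarrow> c \<in> B \<Longrightarrow> g b c = (if b = c then 1 else 0)"
  by (auto simp: gonb_def)

lemma gonb_fin:
  assumes "gonb h g B" and lg: "\<And>y. linear (\<lambda>x. g x y)"
  shows "finite B"
proof -
  have "independent B"
  proof
    assume "dependent B"
    then have "\<exists>T u. finite T \<and> T \<subseteq> B \<and> (\<Sum>v\<in>T. u v *\<^sub>R v) = 0 \<and> (\<exists>v\<in>T. u v \<noteq> 0)"
      by (simp only: real_vector.dependent_explicit)
    then obtain T u v where T: "finite T" "T \<subseteq> B" "(\<Sum>v\<in>T. u v *\<^sub>R v) = 0" and v: "v \<in> T" "u v \<noteq> 0"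
      by blast
    have "0 = g (\<Sum>w\<in>T. u w *\<^sub>R w) v" using T(3) linear_0[OF lg] by simp
    also have "\<dots> = (\<Sum>w\<in>T. u w * g w v)" using lin_sum_scale[OF lg T(1)] by simp
    also have "\<dots> = (\<Sum>w\<in>T. if w = v then u w else 0)"
    proof (rule sum.cong[OF refl])
      fix w assume "w \<in> T"
      then have "w \<in> B" "v \<in> B" using T(2) v by auto
      then show "u w * g w v = (if w = v then u w else 0)" using gonb_on[OF assms(1)] by auto
    qed
    also have "\<dots> = u v" using T(1) v by simp
    finally show False using v by simp
  qed
  then show ?thesis by (rule independent_imp_finite)
qed

definition "sc t e = exp (- (t * lam e) / 2)"
definition "B0 t = (\<lambda>e. sc t e *\<^sub>R e) ` E"

lemma sc_pos: "sc t e > 0" by (simp add: sc_def)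
lemma sc_sq: "sc t e * sc t e = exp (- (t * lam e))"
  by (simp add: sc_def exp_add[symmetric])

lemma inj_sc: "inj_on (\<lambda>e. sc t e *\<^sub>R e) E"
proof (rule inj_onI)
  fix e f assume ef: "e \<in> E" "f \<in> E" "sc t e *\<^sub>R e = sc t f *\<^sub>R f"
  show "e = f"
  proof (rule ccontr)
    assume ne: "e \<noteq> f"
    have "inner (sc t e *\<^sub>R e) e = inner (sc t f *\<^sub>R f) e" using ef(3) by simp
    then have "sc t e = 0" using Eon[OF ef(1) ef(1)] Eon[OF ef(2) ef(1)] ne by simp
    then show False using sc_pos[of t e] by simp
  qed
qed

lemma G_scaled: "e \<in> E \<Longrightarrow> f \<in> E \<Longrightarrow> G t (sc t e *\<^sub>R e) (sc t f *\<^sub>R f) = (if e = f then 1 else 0)"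
proof -
  assume ef: "e \<in> E" "f \<in> E"
  have em: "e \<in> m" using ef Em by auto
  have "G t (sc t e *\<^sub>R e) (sc t f *\<^sub>R f) = sc t e * sc t f * G t e f"
    by (simp add: linear_scale[OF lin_G1] linear_scale[OF lin_G2])
  also have "\<dots> = sc t e * sc t f * exp (t * lam f) * inner e f"
    using G_eig[OF em ef(2)] by simp
  also have "\<dots> = (if e = f then 1 else 0)"
    using Eon[OF ef] sc_sq[of t e] by (auto simp: exp_add[symmetric] mult.assoc[symmetric])
  finally show ?thesis .
qed

lemma B0_gonb: "gonb h (G t) (B0 t)"
  unfolding gonb_def
proof (intro conjI ballI impI)
  show "B0 t \<subseteq> m" using Em msub by (auto simp: B0_def subspace_scale)
  show "span (B0 t) = m" unfolding B0_def
    using real_vector.span_image_scale[OF Efin, of "sc t"] sc_pos Espan by (metis less_irrefl)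
  fix b assume "b \<in> B0 t"
  then obtain e where e: "e \<in> E" "b = sc t e *\<^sub>R e" by (auto simp: B0_def)
  then show "G t b b = 1" using G_scaled[OF e(1) e(1)] by simp
  fix c assume "c \<in> B0 t" "b \<noteq> c"
  then obtain f where f: "f \<in> E" "c = sc t f *\<^sub>R f" by (auto simp: B0_def)
  then show "G t b c = 0" using G_scaled[OF e(1) f(1)] e \<open>b \<noteq> c\<close> by auto
qed

lemma sum_B:
  assumes B: "gonb h (G t) B"
    and l1: "\<And>y. linear (\<lambda>x. \<beta> x y)" and l2: "\<And>x. linear (\<beta> x)"
  shows "(\<Sum>b\<in>B. \<beta> b b) = (\<Sum>e\<in>E. (sc t e * sc t e) * \<beta> e e)"
proof -
  have f0: "finite (B0 t)" by (simp add: B0_def Efin)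
  have fB: "finite B" by (rule gonb_fin[OF B lin_G1])
  have "(\<Sum>b\<in>B. \<beta> b b) = (\<Sum>b\<in>B0 t. \<beta> b b)"
  proof (rule onb_trace_invariant[where g="G t" and S=m, OF lin_G1 G_sym l1 l2])
    show "finite (B0 t)" "B0 t \<subseteq> m" "m \<subseteq> span (B0 t)"
      using f0 B0_gonb[of t] by (auto simp: gonb_def)
    show "\<And>b c. b \<in> B0 t \<Longrightarrow> c \<in> B0 t \<Longrightarrow> G t b c = (if b = c then 1 else 0)"
      using gonb_on[OF B0_gonb] .
    show "finite B" "B \<subseteq> m" "m \<subseteq> span B" using fB B by (auto simp: gonb_def)
    show "\<And>b c. b \<in> B \<Longrightarrow> c \<in> B \<Longrightarrow> G t b c = (if b = c then 1 else 0)"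
      using gonb_on[OF B] .
  qed
  also have "\<dots> = (\<Sum>e\<in>E. \<beta> (sc t e *\<^sub>R e) (sc t e *\<^sub>R e))"
    unfolding B0_def by (rule sum.reindex[OF inj_sc, unfolded o_def])
  also have "\<dots> = (\<Sum>e\<in>E. (sc t e * sc t e) * \<beta> e e)"
    by (simp add: linear_scale[OF l1] linear_scale[OF l2] mult.assoc)
  finally show ?thesis .
qed

definition "BB t = (SOME B. gonb h (G t) B)"
lemma BB_gonb: "gonb h (G t) (BB t)"
  unfolding BB_def by (rule someI[where x="B0 t"]) (rule B0_gonb)

lemma killing_alt: "killing br X Y =
   (\<Sum>i\<in>UNIV. \<Sum>k\<in>UNIV. (br X (axis k 1)) $ i * (br Y (axis i 1)) $ k)"
  by (simp add: killing_def trace_def matrix_matrix_mult_def matrix_def)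

lemma lin_nth: "linear (f::'a::real_vector \<Rightarrow> real^'k) \<Longrightarrow> linear (\<lambda>x. f x $ i)"
proof -
  assume "linear f"
  then have "linear (\<lambda>x. inner (f x) (axis i 1))" by (rule lin_comp[OF _ lin_inner_left])
  then show ?thesis by (simp add: cart_eq_inner_axis)
qed

lemma killing_lin1: "linear (\<lambda>X. killing br X Y)"
  unfolding killing_alt
  by (intro real_vector.linear_compose_sum ballI lin_mulc lin_nth[OF linL])

lemma killing_lin2: "linear (\<lambda>Y. killing br X Y)"
  unfolding killing_alt
  by (intro real_vector.linear_compose_sum ballI lin_cmul lin_nth[OF linL])

lemma ricci_lin1: "linear (\<lambda>X. ricci br h (G t) X Y)"
  unfolding ricci_def Let_def
  by (intro linear_compose_add linear_compose_sub lin_cmul killing_lin1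
      real_vector.linear_compose_sum ballI lin_mulc lin_G2
      lin_comp[OF lin_comp[OF linL linP] lin_G1])

lemma ricci_lin2: "linear (\<lambda>Y. ricci br h (G t) X Y)"
  unfolding ricci_def Let_def
  by (intro linear_compose_add linear_compose_sub lin_cmul killing_lin2
      real_vector.linear_compose_sum ballI lin_G2
      lin_comp[OF lin_comp[OF linL linP] lin_G2])

definition "SB = range (\<lambda>i. axis i (1::real))"

lemma SB_on: "b \<in> SB \<Longrightarrow> c \<in> SB \<Longrightarrow> inner b c = (if b = c then 1 else 0)"
  by (auto simp: SB_def inner_axis_axis axis_eq_axis)

lemma SB_span: "(x::real^'n) \<in> span SB"
proof -
  have "x = (\<Sum>i\<in>UNIV. x $ i *\<^sub>R axis i 1)"
    using basis_expansion[of x] by (simp add: scalar_mult_eq_scaleR)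
  moreover have "(\<Sum>i\<in>UNIV. x $ i *\<^sub>R axis i 1) \<in> span SB"
    by (intro span_sum span_mul span_base) (auto simp: SB_def)
  ultimately show ?thesis by simp
qed

lemma SB_sum: "(\<Sum>b\<in>SB. f b) = (\<Sum>i\<in>UNIV. f (axis i 1))"
  unfolding SB_def by (rule sum.reindex[unfolded o_def]) (auto simp: inj_on_def axis_eq_axis)

lemma killing_Eg: "killing br x x = - (\<Sum>e\<in>Eg. \<Sum>f\<in>Eg. (inner (br x e) f)\<^sup>2)"
proof -
  have anti: "(br x (axis i 1)) $ k = - (br x (axis k 1)) $ i" for i k
  proof -
    have "(br x (axis i 1)) $ k = inner (br x (axis i 1)) (axis k 1)" by (rule cart_eq_inner_axis)
    also have "\<dots> = - inner (axis i 1) (br x (axis k 1))" by (rule skew)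
    also have "inner (axis i 1) (br x (axis k 1)) = (br x (axis k 1)) $ i"
      by (metis cart_eq_inner_axis inner_commute)
    finally show ?thesis .
  qed
  have "killing br x x = (\<Sum>i\<in>UNIV. \<Sum>k\<in>UNIV. - ((br x (axis k 1)) $ i)\<^sup>2)"
    unfolding killing_alt
  proof (intro sum.cong refl)
    fix i k
    show "(br x (axis k 1)) $ i * (br x (axis i 1)) $ k = - ((br x (axis k 1)) $ i)\<^sup>2"
      using anti[of i k] by (simp add: power2_eq_square)
  qed
  also have "\<dots> = - (\<Sum>k\<in>UNIV. \<Sum>i\<in>UNIV. ((br x (axis k 1)) $ i)\<^sup>2)"
    by (subst sum.swap) (simp add: sum_negf)
  also have "\<dots> = - (\<Sum>k\<in>UNIV. inner (br x (axis k 1)) (br x (axis k 1)))"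
    by (simp add: inner_vec_def power2_eq_square)
  also have "(\<Sum>k\<in>UNIV. inner (br x (axis k 1)) (br x (axis k 1))) = (\<Sum>b\<in>SB. inner (br x b) (br x b))"
    by (simp add: SB_sum)
  also have "\<dots> = (\<Sum>e\<in>Eg. inner (br x e) (br x e))"
  proof (rule onb_trace_invariant[where g=inner and S=UNIV and \<beta>="\<lambda>u v. inner (br x u) (br x v)"])
    show "\<And>y. linear (\<lambda>u. inner u y)" by (rule lin_inner_left)
    show "\<And>u v. u \<in> UNIV \<Longrightarrow> v \<in> UNIV \<Longrightarrow> inner u v = inner v u" by (simp add: inner_commute)
    show "\<And>y. linear (\<lambda>u. inner (br x u) (br x y))" by (rule lin_comp[OF linR lin_inner_left])
    show "\<And>u. linear (\<lambda>v. inner (br x u) (br x v))" by (rule lin_comp[OF linR lin_inner_right])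
    show "finite Eg" "Eg \<subseteq> UNIV" "UNIV \<subseteq> span Eg" using Eg_fin Eg_span by auto
    show "\<And>b c. b \<in> Eg \<Longrightarrow> c \<in> Eg \<Longrightarrow> inner b c = (if b = c then 1 else 0)" by (rule Eg_on)
    show "finite (SB::(real^'n) set)" by (simp add: SB_def)
    show "(SB::(real^'n) set) \<subseteq> UNIV" by simp
    show "UNIV \<subseteq> span (SB::(real^'n) set)" using SB_span by blast
    show "\<And>b c. b \<in> (SB::(real^'n) set) \<Longrightarrow> c \<in> SB \<Longrightarrow> inner b c = (if b = c then 1 else 0)" by (rule SB_on)
  qed
  also have "\<dots> = (\<Sum>e\<in>Eg. \<Sum>f\<in>Eg. (inner (br x e) f)\<^sup>2)"
    by (simp add: parseval)
  finally show ?thesis .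
qed

lemma G_PP: "G t (P y) (P y) = (\<Sum>f\<in>E. exp (t * lam f) * (inner y f)\<^sup>2)"
  unfolding G_m[OF Pm]
proof (rule sum.cong[OF refl])
  fix f assume "f \<in> E"
  then have "f \<in> m" using Em by auto
  then show "exp (t * lam f) * inner (P y) f * inner f (P y) = exp (t * lam f) * (inner y f)\<^sup>2"
    using P_inner[of f y] by (simp add: inner_commute[of f] power2_eq_square)
qed

lemma G_Pe0: "e0 \<in> EF \<Longrightarrow> G t (P y) e0 = exp (t * \<mu>) * inner y e0"
proof -
  assume e0: "e0 \<in> EF"
  then have "e0 \<in> E" "e0 \<in> m" using EFE Em by auto
  then show ?thesis using G_eig[OF Pm \<open>e0 \<in> E\<close>] P_inner EFmu[OF e0] by simp
qed

definition "N x e = (\<Sum>f\<in>Eg. (inner (br x e) f)\<^sup>2)"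

lemma N_nonneg: "N x e \<ge> 0" by (simp add: N_def sum_nonneg)

lemma T1_bound:
  assumes e0: "e0 \<in> EF" and t: "t \<ge> 0"
  shows "(\<Sum>b\<in>BB t. G t (P (br e0 b)) (P (br e0 b))) \<le> (\<Sum>e\<in>E. N e0 e)"
proof -
  have "(\<Sum>b\<in>BB t. G t (P (br e0 b)) (P (br e0 b))) =
        (\<Sum>e\<in>E. (sc t e * sc t e) * G t (P (br e0 e)) (P (br e0 e)))"
    by (rule sum_B[OF BB_gonb, where \<beta>="\<lambda>u v. G t (P (br e0 u)) (P (br e0 v))"])
       (rule lin_comp[OF lin_comp[OF linR linP] lin_G1], rule lin_comp[OF lin_comp[OF linR linP] lin_G2])
  also have "\<dots> \<le> (\<Sum>e\<in>E. N e0 e)"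
  proof (rule sum_mono)
    fix e assume eE: "e \<in> E"
    have e0E: "e0 \<in> E" using e0 EFE by auto
    have "(sc t e * sc t e) * G t (P (br e0 e)) (P (br e0 e))
        = (\<Sum>f\<in>E. exp (- (t * lam e)) * exp (t * lam f) * (inner (br e0 e) f)\<^sup>2)"
      by (simp add: G_PP sc_sq sum_distrib_left mult.assoc)
    also have "\<dots> \<le> (\<Sum>f\<in>E. (inner (br e0 e) f)\<^sup>2)"
    proof (rule sum_mono)
      fix f assume fE: "f \<in> E"
      show "exp (- (t * lam e)) * exp (t * lam f) * (inner (br e0 e) f)\<^sup>2 \<le> (inner (br e0 e) f)\<^sup>2"
      proof (cases "inner (br e0 e) f = 0")
        case False
        have "inner (br f e0) e \<noteq> 0" using False cyc[of f e0 e] by (simp add: inner_commute)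
        then have "lam f - lam e0 - lam e + \<mu> \<le> 0" by (rule SDE[OF fE e0E eE])
        then have "lam f \<le> lam e" using EFmu[OF e0] by simp
        then have "exp (- (t * lam e)) * exp (t * lam f) \<le> 1"
          using t by (simp add: exp_add[symmetric] mult_left_mono algebra_simps)
        then show ?thesis by (simp add: mult_left_le_one_le)
      qed simp
    qed
    also have "\<dots> \<le> N e0 e" unfolding N_def
      by (rule sum_mono2[OF Eg_fin]) (auto simp: Eg_def)
    finally show "(sc t e * sc t e) * G t (P (br e0 e)) (P (br e0 e)) \<le> N e0 e" .
  qed
  finally show ?thesis .
qed

lemma T3_bound:
  assumes e0: "e0 \<in> EF"
  shows "(\<Sum>e\<in>EF. \<Sum>f\<in>EF. (inner (br e f) e0)\<^sup>2) \<le>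
         (\<Sum>b\<in>BB t. \<Sum>c\<in>BB t. G t (P (br b c)) e0 * G t (P (br b c)) e0)"
proof -
  let ?F = "\<lambda>u v. G t (P (br u v)) e0"
  have l1: "linear (\<lambda>u. ?F u v)" for v by (rule lin_comp[OF lin_comp[OF linL linP] lin_G1])
  have l2: "linear (\<lambda>v. ?F u v)" for u by (rule lin_comp[OF lin_comp[OF linR linP] lin_G1])
  have inner_step: "(\<Sum>c\<in>BB t. ?F b c * ?F b c) = (\<Sum>f\<in>E. (sc t f * sc t f) * (?F b f * ?F b f))" for b
    by (rule sum_B[OF BB_gonb, where \<beta>="\<lambda>u v. ?F b u * ?F b v"])
       (rule lin_mulc[OF l2], rule lin_cmul[OF l2])
  have outer_step: "(\<Sum>b\<in>BB t. (sc t f * sc t f) * (?F b f * ?F b f)) =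
      (\<Sum>e\<in>E. (sc t e * sc t e) * ((sc t f * sc t f) * (?F e f * ?F e f)))" for f
    by (rule sum_B[OF BB_gonb, where \<beta>="\<lambda>u v. (sc t f * sc t f) * (?F u f * ?F v f)"])
       (simp_all add: lin_prod[OF l1] lin_cmul[OF l1] mult.assoc[symmetric])
  have "(\<Sum>b\<in>BB t. \<Sum>c\<in>BB t. ?F b c * ?F b c) =
        (\<Sum>b\<in>BB t. \<Sum>f\<in>E. (sc t f * sc t f) * (?F b f * ?F b f))"
    by (simp add: inner_step)
  also have "\<dots> = (\<Sum>f\<in>E. \<Sum>b\<in>BB t. (sc t f * sc t f) * (?F b f * ?F b f))"
    by (rule sum.swap)
  also have "\<dots> = (\<Sum>f\<in>E. \<Sum>e\<in>E. (sc t e * sc t e) * ((sc t f * sc t f) * (?F e f * ?F e f)))"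
    by (simp add: outer_step)
  finally have eq: "(\<Sum>b\<in>BB t. \<Sum>c\<in>BB t. ?F b c * ?F b c) =
     (\<Sum>f\<in>E. \<Sum>e\<in>E. (sc t e * sc t e) * ((sc t f * sc t f) * (?F e f * ?F e f)))" .
  have nn: "0 \<le> (sc t e * sc t e) * ((sc t f * sc t f) * (?F e f * ?F e f))" for e f
  proof -
    have "0 \<le> ?F e f * ?F e f" by simp
    moreover have "0 \<le> sc t e * sc t e" "0 \<le> sc t f * sc t f" by simp_all
    ultimately show ?thesis by simp
  qed
  have "(\<Sum>f\<in>EF. \<Sum>e\<in>EF. (sc t e * sc t e) * ((sc t f * sc t f) * (?F e f * ?F e f)))
      \<le> (\<Sum>f\<in>EF. \<Sum>e\<in>E. (sc t e * sc t e) * ((sc t f * sc t f) * (?F e f * ?F e f)))"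
    by (intro sum_mono sum_mono2 Efin EFE nn)
  also have "\<dots> \<le> (\<Sum>f\<in>E. \<Sum>e\<in>E. (sc t e * sc t e) * ((sc t f * sc t f) * (?F e f * ?F e f)))"
    by (intro sum_mono2 Efin EFE sum_nonneg nn)
  finally have le: "(\<Sum>f\<in>EF. \<Sum>e\<in>EF. (sc t e * sc t e) * ((sc t f * sc t f) * (?F e f * ?F e f)))
      \<le> (\<Sum>b\<in>BB t. \<Sum>c\<in>BB t. ?F b c * ?F b c)" using eq by simp
  have val: "(sc t e * sc t e) * ((sc t f * sc t f) * (?F e f * ?F e f)) = (inner (br e f) e0)\<^sup>2"
    if "e \<in> EF" "f \<in> EF" for e f
  proof -
    have "lam e = \<mu>" "lam f = \<mu>" using that EFmu by auto
    then show ?thesis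
      by (simp add: sc_sq G_Pe0[OF e0] power2_eq_square exp_add[symmetric] mult_ac)
  qed
  have "(\<Sum>e\<in>EF. \<Sum>f\<in>EF. (inner (br e f) e0)\<^sup>2) =
        (\<Sum>f\<in>EF. \<Sum>e\<in>EF. (sc t e * sc t e) * ((sc t f * sc t f) * (?F e f * ?F e f)))"
    by (subst sum.swap) (simp add: val)
  then show ?thesis using le by simp
qed

definition "L x = (1/2) * (\<Sum>e\<in>Eh. N x e) + (1/4) * (\<Sum>e\<in>EF. \<Sum>f\<in>EF. (inner (br e f) x)\<^sup>2)"

lemma L_nonneg: "L x \<ge> 0"
  unfolding L_def by (intro add_nonneg_nonneg mult_nonneg_nonneg sum_nonneg N_nonneg) auto

lemma Eh_E_disj: "Eh \<inter> E = {}"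
proof (rule ccontr)
  assume "Eh \<inter> E \<noteq> {}"
  then obtain e where "e \<in> Eh" "e \<in> E" by auto
  then have "e \<in> h" "e \<in> m" using Ehh Em by auto
  then have "e = 0" by (rule hm_int)
  then show False using Eon[OF \<open>e \<in> E\<close> \<open>e \<in> E\<close>] by simp
qed

lemma ricci_lower:
  assumes e0: "e0 \<in> EF" and t: "t \<ge> 0"
  shows "L e0 \<le> ricci br h (G t) e0 e0"
proof -
  have r: "ricci br h (G t) e0 e0 =
     - (1/2) * (\<Sum>b\<in>BB t. G t (P (br e0 b)) (P (br e0 b)))
     - (1/2) * killing br e0 e0
     + (1/4) * (\<Sum>b\<in>BB t. \<Sum>c\<in>BB t. G t (P (br b c)) e0 * G t (P (br b c)) e0)"
    unfolding ricci_def Let_def BB_def by simp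
  have k: "killing br e0 e0 = - ((\<Sum>e\<in>Eh. N e0 e) + (\<Sum>e\<in>E. N e0 e))"
  proof -
    have "killing br e0 e0 = - (\<Sum>e\<in>Eg. N e0 e)" by (simp add: killing_Eg N_def)
    also have "(\<Sum>e\<in>Eg. N e0 e) = (\<Sum>e\<in>Eh. N e0 e) + (\<Sum>e\<in>E. N e0 e)"
      unfolding Eg_def by (rule sum.union_disjoint[OF Ehfin Efin Eh_E_disj])
    finally show ?thesis .
  qed
  show ?thesis
    unfolding r k L_def by (rule aux_ineq[OF T1_bound[OF e0 t] T3_bound[OF e0, of t]])
qed

lemma ric_norm_lower:
  assumes e0: "e0 \<in> EF" and t: "t \<ge> 0"
  shows "exp (- (t * \<mu>)) * L e0 \<le> ric_norm br h (G t)"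
proof -
  let ?R = "\<lambda>u v. ricci br h (G t) u v"
  have e0E: "e0 \<in> E" using e0 EFE by auto
  have inner_step: "(\<Sum>c\<in>BB t. (?R b c)\<^sup>2) = (\<Sum>f\<in>E. (sc t f * sc t f) * (?R b f * ?R b f))" for b
    unfolding power2_eq_square
    by (rule sum_B[OF BB_gonb, where \<beta>="\<lambda>u v. ?R b u * ?R b v"])
       (rule lin_mulc[OF ricci_lin2], rule lin_cmul[OF ricci_lin2])
  have outer_step: "(\<Sum>b\<in>BB t. (sc t f * sc t f) * (?R b f * ?R b f)) =
      (\<Sum>e\<in>E. (sc t e * sc t e) * ((sc t f * sc t f) * (?R e f * ?R e f)))" for f
    by (rule sum_B[OF BB_gonb, where \<beta>="\<lambda>u v. (sc t f * sc t f) * (?R u f * ?R v f)"])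
       (simp_all add: lin_prod[OF ricci_lin1] lin_cmul[OF ricci_lin1] mult.assoc[symmetric])
  have nn: "0 \<le> (sc t e * sc t e) * ((sc t f * sc t f) * (?R e f * ?R e f))" for e f
  proof -
    have "0 \<le> ?R e f * ?R e f" by simp
    moreover have "0 \<le> sc t e * sc t e" "0 \<le> sc t f * sc t f" by simp_all
    ultimately show ?thesis by simp
  qed
  have "(\<Sum>b\<in>BB t. \<Sum>c\<in>BB t. (?R b c)\<^sup>2) =
        (\<Sum>b\<in>BB t. \<Sum>f\<in>E. (sc t f * sc t f) * (?R b f * ?R b f))"
    by (simp add: inner_step)
  also have "\<dots> = (\<Sum>f\<in>E. \<Sum>b\<in>BB t. (sc t f * sc t f) * (?R b f * ?R b f))"
    by (rule sum.swap)
  also have "\<dots> = (\<Sum>f\<in>E. \<Sum>e\<in>E. (sc t e * sc t e) * ((sc t f * sc t f) * (?R e f * ?R e f)))"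
    by (simp add: outer_step)
  also have "\<dots> \<ge> (\<Sum>e\<in>E. (sc t e * sc t e) * ((sc t e0 * sc t e0) * (?R e e0 * ?R e e0)))"
    by (rule member_le_sum[OF e0E _ Efin]) (intro sum_nonneg nn)
  also have "(\<Sum>e\<in>E. (sc t e * sc t e) * ((sc t e0 * sc t e0) * (?R e e0 * ?R e e0)))
      \<ge> (sc t e0 * sc t e0) * ((sc t e0 * sc t e0) * (?R e0 e0 * ?R e0 e0))"
    by (rule member_le_sum[OF e0E _ Efin]) (rule nn)
  finally have ge: "(exp (- (t * \<mu>)) * ?R e0 e0)\<^sup>2 \<le> (\<Sum>b\<in>BB t. \<Sum>c\<in>BB t. (?R b c)\<^sup>2)"
    using EFmu[OF e0] by (simp add: sc_sq power2_eq_square mult_ac)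
  have "exp (- (t * \<mu>)) * L e0 \<le> exp (- (t * \<mu>)) * ?R e0 e0"
    using ricci_lower[OF e0 t] by simp
  also have "\<dots> \<le> sqrt (\<Sum>b\<in>BB t. \<Sum>c\<in>BB t. (?R b c)\<^sup>2)"
    using real_le_rsqrt[OF ge] .
  also have "\<dots> = ric_norm br h (G t)"
    unfolding ric_norm_def Let_def BB_def by simp
  finally show ?thesis .
qed

lemma zero_by_Eg: "(\<And>f. f \<in> Eg \<Longrightarrow> inner x f = 0) \<Longrightarrow> x = 0"
  using Eg_expand[of x] by (metis (no_types, lifting) scale_zero_left sum.neutral)

lemma L_pos:
  assumes hsa: "lie_subalgebra br h" and ksub: "lie_subalgebra br k" and hk: "h \<subseteq> k" and kF: "span EF = k \<inter> m"
    and nt: "non_toral br h k"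
  shows "\<exists>e0\<in>EF. L e0 > 0"
proof (rule ccontr)
  assume "\<not> ?thesis"
  then have L0: "L e0 = 0" if "e0 \<in> EF" for e0 using that L_nonneg by (meson not_less order_antisym)
  have EFfin: "finite EF" using EFE Efin finite_subset by blast
  have parts: "(\<Sum>e\<in>Eh. N e0 e) = 0 \<and> (\<Sum>e\<in>EF. \<Sum>f\<in>EF. (inner (br e f) e0)\<^sup>2) = 0" if "e0 \<in> EF" for e0
  proof -
    have a: "(\<Sum>e\<in>Eh. N e0 e) \<ge> 0" by (simp add: sum_nonneg N_nonneg)
    have b: "(\<Sum>e\<in>EF. \<Sum>f\<in>EF. (inner (br e f) e0)\<^sup>2) \<ge> 0" by (simp add: sum_nonneg)
    show ?thesis using L0[OF that] a b unfolding L_def by linarith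
  qed
  have Z1a: "br e0 e = 0" if "e0 \<in> EF" "e \<in> Eh" for e0 e
  proof -
    have "N e0 e = 0" using parts[OF that(1)] sum_nonneg_eq_0_iff[OF Ehfin] N_nonneg that(2) by blast
    then have "\<forall>f\<in>Eg. (inner (br e0 e) f)\<^sup>2 = 0"
      unfolding N_def using sum_nonneg_eq_0_iff[OF Eg_fin, of "\<lambda>f. (inner (br e0 e) f)\<^sup>2"] by simp
    then show ?thesis by (intro zero_by_Eg) simp
  qed
  have Z2a: "inner (br e f) e0 = 0" if "e0 \<in> EF" "e \<in> EF" "f \<in> EF" for e0 e f
  proof -
    have "\<forall>e\<in>EF. (\<Sum>f\<in>EF. (inner (br e f) e0)\<^sup>2) = 0"
      using parts[OF that(1)] sum_nonneg_eq_0_iff[OF EFfin, of "\<lambda>e. \<Sum>f\<in>EF. (inner (br e f) e0)\<^sup>2"]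
      by (simp add: sum_nonneg)
    then have "\<forall>f\<in>EF. (inner (br e f) e0)\<^sup>2 = 0"
      using that(2) sum_nonneg_eq_0_iff[OF EFfin, of "\<lambda>f. (inner (br e f) e0)\<^sup>2"] by simp
    then show ?thesis using that(3) by simp
  qed
  have Z1: "br x y = 0" if "x \<in> span EF" "y \<in> span Eh" for x y
  proof -
    have "br x e = 0" if "e \<in> Eh" for e
      by (rule real_vector.linear_eq_0_on_span[OF linL _ \<open>x \<in> span EF\<close>]) (use Z1a that in blast)
    then show ?thesis by (rule real_vector.linear_eq_0_on_span[OF linR _ \<open>y \<in> span Eh\<close>])
  qed
  have Z2: "inner (br x y) z = 0" if "x \<in> span EF" "y \<in> span EF" "z \<in> span EF" for x y z
  proof -
    have s1: "inner (br e f) z = 0" if "e \<in> EF" "f \<in> EF" for e f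
      by (rule real_vector.linear_eq_0_on_span[OF lin_inner_right _ \<open>z \<in> span EF\<close>])
         (use Z2a that in blast)
    have s2: "inner (br e y) z = 0" if "e \<in> EF" for e
      by (rule real_vector.linear_eq_0_on_span[OF lin_comp[OF linR lin_inner_left] _ \<open>y \<in> span EF\<close>])
         (use s1 that in blast)
    show ?thesis
      by (rule real_vector.linear_eq_0_on_span[OF lin_comp[OF linL lin_inner_left] _ \<open>x \<in> span EF\<close>])
         (use s2 in blast)
  qed
  have ksp: "subspace k" using ksub by (simp add: lie_subalgebra_def)
  have Pk: "P x \<in> span EF" if "x \<in> k" for x
  proof -
    have "x - P x \<in> k" using Ph hk by blast
    then have "x - (x - P x) \<in> k" using subspace_diff[OF ksp that] by blast
    then show ?thesis using Pm kF by simp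
  qed
  obtain x y where xy: "x \<in> k" "y \<in> k" "br x y \<notin> h"
    using nt by (auto simp: non_toral_def)
  let ?xh = "x - P x" and ?yh = "y - P y"
  have xh: "?xh \<in> h" "?yh \<in> h" using Ph by auto
  have xhs: "?xh \<in> span Eh" "?yh \<in> span Eh" using xh Ehspan by auto
  have e1: "br (a + b) (c + d) = br a c + br a d + br b c + br b d" for a b c d
    by (simp add: linear_add[OF linL] linear_add[OF linR])
  have "br x y = br (?xh + P x) (?yh + P y)" by simp
  also have "\<dots> = br ?xh ?yh + br ?xh (P y) + br (P x) ?yh + br (P x) (P y)"
    by (rule e1)
  also have "br ?xh (P y) = 0" using Z1[OF Pk[OF xy(2)] xhs(1)] br_anti[of ?xh "P y"] by simp
  also have "br (P x) ?yh = 0" using Z1[OF Pk[OF xy(1)] xhs(2)] by simp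
  finally have bxy: "br x y = br ?xh ?yh + br (P x) (P y)" by simp
  have hh: "br ?xh ?yh \<in> h" using xh hsa by (simp add: lie_subalgebra_def)
  let ?w = "br (P x) (P y)"
  have wnh: "?w \<notin> h"
  proof
    assume "?w \<in> h"
    then have "br x y \<in> h" using bxy hh hsub by (simp add: subspace_add)
    then show False using xy(3) by simp
  qed
  have Pxk: "P x \<in> k" "P y \<in> k" using Pk[OF xy(1)] Pk[OF xy(2)] kF by auto
  have wk: "?w \<in> k" using ksub Pxk by (simp add: lie_subalgebra_def)
  have "inner ?w (P ?w) = 0" using Z2[OF Pk[OF xy(1)] Pk[OF xy(2)] Pk[OF wk]] .
  then have "inner (P ?w) (P ?w) = 0" using P_inner[OF Pm, of ?w ?w] by simp
  then have "P ?w = 0" by simp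
  then have "?w \<in> h" using Ph[of ?w] by simp
  then show False using wnh by simp
qed

lemma trace_Eg: "trace (A::real^'n^'n) = (\<Sum>e\<in>Eg. inner (A *v e) e)"
proof -
  have "inner (A *v axis i 1) (axis i 1) = A$i$i" for i
    by (simp add: cart_eq_inner_axis[symmetric] matrix_vector_mult_basis column_def)
  then have "trace A = (\<Sum>i\<in>UNIV. inner (A *v axis i 1) (axis i 1))"
    by (simp add: trace_def)
  also have "\<dots> = (\<Sum>b\<in>SB. inner (A *v b) b)" by (simp add: SB_sum)
  also have "\<dots> = (\<Sum>e\<in>Eg. inner (A *v e) e)"
  proof (rule onb_trace_invariant[where g=inner and S=UNIV and \<beta>="\<lambda>u v. inner (A *v u) v"])
    show "\<And>y. linear (\<lambda>u. inner u y)" by (rule lin_inner_left)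
    show "\<And>u v. u \<in> UNIV \<Longrightarrow> v \<in> UNIV \<Longrightarrow> inner u v = inner v u" by (simp add: inner_commute)
    show "\<And>y. linear (\<lambda>u. inner (A *v u) y)" by (rule lin_comp[OF matrix_vector_mul_linear lin_inner_left])
    show "\<And>u. linear (\<lambda>v. inner (A *v u) v)" by (rule lin_inner_right)
    show "finite Eg" "Eg \<subseteq> UNIV" "UNIV \<subseteq> span Eg" using Eg_fin Eg_span by auto
    show "\<And>b c. b \<in> Eg \<Longrightarrow> c \<in> Eg \<Longrightarrow> inner b c = (if b = c then 1 else 0)" by (rule Eg_on)
    show "finite (SB::(real^'n) set)" by (simp add: SB_def)
    show "(SB::(real^'n) set) \<subseteq> UNIV" by simp
    show "UNIV \<subseteq> span (SB::(real^'n) set)" using SB_span by blast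
    show "\<And>b c. b \<in> (SB::(real^'n) set) \<Longrightarrow> c \<in> SB \<Longrightarrow> inner b c = (if b = c then 1 else 0)" by (rule SB_on)
  qed
  finally show ?thesis .
qed

lemma neg_eig:
  assumes V0: "\<And>x. x \<in> h \<Longrightarrow> V *v x = 0" and tr: "trace V = 0" and tr2: "trace (V ** V) = 1"
  shows "\<exists>e\<in>E. lam e < 0"
proof -
  have Eh0: "(\<Sum>e\<in>Eh. inner (A *v e) e) = 0" if "\<And>x. x \<in> h \<Longrightarrow> A *v x = 0" for A :: "real^'n^'n"
    by (rule sum.neutral) (use that Ehh in auto)
  have split: "trace A = (\<Sum>e\<in>E. inner (A *v e) e)" if "\<And>x. x \<in> h \<Longrightarrow> A *v x = 0" for A :: "real^'n^'n"
  proof -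
    have "trace A = (\<Sum>e\<in>Eh. inner (A *v e) e) + (\<Sum>e\<in>E. inner (A *v e) e)"
      unfolding trace_Eg Eg_def by (rule sum.union_disjoint[OF Ehfin Efin Eh_E_disj])
    then show ?thesis using Eh0[OF that] by simp
  qed
  have s1: "(\<Sum>e\<in>E. lam e) = 0"
  proof -
    have "(\<Sum>e\<in>E. lam e) = (\<Sum>e\<in>E. inner (V *v e) e)"
      by (rule sum.cong) (use Eeig Eon in auto)
    then show ?thesis using split[OF V0] tr by simp
  qed
  have s2: "(\<Sum>e\<in>E. lam e * lam e) = 1"
  proof -
    have VV0: "(V ** V) *v x = 0" if "x \<in> h" for x
      using V0[OF that] by (simp add: matrix_vector_mul_assoc[symmetric])
    have "(\<Sum>e\<in>E. lam e * lam e) = (\<Sum>e\<in>E. inner ((V ** V) *v e) e)"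
    proof (rule sum.cong[OF refl])
      fix e assume e: "e \<in> E"
      have "(V ** V) *v e = (lam e * lam e) *\<^sub>R e"
        using Eeig[OF e] by (simp add: matrix_vector_mul_assoc[symmetric] linear_scale[OF matrix_vector_mul_linear])
      then show "lam e * lam e = inner ((V ** V) *v e) e" using Eon[OF e e] by simp
    qed
    then show ?thesis using split[OF VV0] tr2 by simp
  qed
  show ?thesis
  proof (rule ccontr)
    assume "\<not> ?thesis"
    then have nn: "\<And>e. e \<in> E \<Longrightarrow> lam e \<ge> 0" by force
    then have "\<forall>e\<in>E. lam e = 0" using s1 sum_nonneg_eq_0_iff[OF Efin, of lam] by blast
    then have "(\<Sum>e\<in>E. lam e * lam e) = 0" by simp
    then show False using s2 by simp
  qed
qed

lemma vhat1_le:
  assumes sym: "transpose V = V" and e: "e \<in> E"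
  shows "vhat1 h V \<le> lam e"
proof -
  let ?S = "{c. \<exists>x\<in>m. x \<noteq> 0 \<and> V *v x = c *\<^sub>R x}"
  have sub: "?S \<subseteq> lam ` E"
  proof
    fix c assume "c \<in> ?S"
    then obtain x where x: "x \<in> m" "x \<noteq> 0" "V *v x = c *\<^sub>R x" by blast
    have "\<exists>f\<in>E. inner x f \<noteq> 0"
    proof (rule ccontr)
      assume na: "\<not> (\<exists>f\<in>E. inner x f \<noteq> 0)"
      have "x = (\<Sum>f\<in>E. inner x f *\<^sub>R f)" using E_expand[OF x(1)] by simp
      also have "\<dots> = 0" using na by (auto intro!: sum.neutral)
      finally show False using x(2) by simp
    qed
    then obtain f where f: "f \<in> E" "inner x f \<noteq> 0" by blast
    have "c * inner x f = inner (V *v x) f" using x(3) by simp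
    also have "\<dots> = inner x (V *v f)" by (simp add: inner_mv_transpose sym)
    also have "\<dots> = lam f * inner x f" using Eeig[OF f(1)] by simp
    finally have "c = lam f" using f(2) by simp
    then show "c \<in> lam ` E" using f(1) by blast
  qed
  have fin: "finite ?S" using finite_subset[OF sub] Efin by blast
  have "lam e \<in> ?S"
  proof -
    have "e \<in> m" using e Em by auto
    moreover have "e \<noteq> 0" using Eon[OF e e] by auto
    ultimately show ?thesis using Eeig[OF e] by blast
  qed
  then show ?thesis unfolding vhat1_def using fin by (rule Min_le[rotated])
qed

end

lemma span_UN_eq:
  assumes "\<And>i. i \<in> I \<Longrightarrow> span (B i) = S i"
  shows "span (\<Union>i\<in>I. B i) = span (\<Union>i\<in>I. S i)"
proof (rule antisym)
  have "(\<Union>i\<in>I. B i) \<subseteq> (\<Union>i\<in>I. S i)" using assms span_superset by blast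
  then show "span (\<Union>i\<in>I. B i) \<subseteq> span (\<Union>i\<in>I. S i)" by (rule span_mono)
  have "(\<Union>i\<in>I. S i) \<subseteq> span (\<Union>i\<in>I. B i)"
  proof
    fix x assume "x \<in> (\<Union>i\<in>I. S i)"
    then obtain i where i: "i \<in> I" "x \<in> S i" by blast
    then have "x \<in> span (B i)" using assms by simp
    moreover have "span (B i) \<subseteq> span (\<Union>i\<in>I. B i)" using i(1) by (intro span_mono) blast
    ultimately show "x \<in> span (\<Union>i\<in>I. B i)" by blast
  qed
  then have "span (\<Union>i\<in>I. S i) \<subseteq> span (span (\<Union>i\<in>I. B i))" by (rule span_mono)
  then show "span (\<Union>i\<in>I. S i) \<subseteq> span (\<Union>i\<in>I. B i)" by (metis span_span)
qed

lemma onb_fin: "onb S B \<Longrightarrow> finite B"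
proof -
  assume o: "onb S B"
  have "0 \<notin> B" using o by (auto simp: onb_def)
  then have "independent B" using o pairwise_orthogonal_independent by (auto simp: onb_def)
  then show ?thesis by (rule independent_imp_finite)
qed

lemma onb_ex: "subspace S \<Longrightarrow> onb S (SOME B. onb S B)"
proof -
  assume "subspace S"
  then obtain B where "B \<subseteq> S" "pairwise orthogonal B" "\<And>x. x \<in> B \<Longrightarrow> norm x = 1" "span B = S"
    by (rule orthonormal_basis_subspace) blast
  then have "onb S B" by (simp add: onb_def)
  then show ?thesis by (rule someI)
qed

lemma onb_on: "onb S B \<Longrightarrow> e \<in> B \<Longrightarrow> f \<in> B \<Longrightarrow> inner e f = (if e = f then 1 else 0)"
  by (auto simp: onb_def pairwise_def orthogonal_def norm_eq_1)

lemma exp_lin_at_top: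
  assumes "(\<mu>::real) < 0" "L > 0"
  shows "filterlim (\<lambda>t. exp (- (t * \<mu>)) * L) at_top at_top"
proof -
  have "filterlim (\<lambda>t::real. (- \<mu>) * t) at_top at_top"
    by (rule filterlim_tendsto_pos_mult_at_top[OF tendsto_const _ filterlim_ident]) (use assms in simp)
  then have "filterlim (\<lambda>t::real. exp ((- \<mu>) * t)) at_top at_top"
    by (rule filterlim_compose[OF exp_at_top])
  then have "filterlim (\<lambda>t::real. L * exp ((- \<mu>) * t)) at_top at_top"
    by (rule filterlim_tendsto_pos_mult_at_top[OF tendsto_const assms(2)])
  moreover have "(\<lambda>t::real. L * exp ((- \<mu>) * t)) = (\<lambda>t. exp (- (t * \<mu>)) * L)"
    by (rule ext) (simp add: algebra_simps)
  ultimately show ?thesis by simp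
qed

theorem mainTheorem11:
  fixes br :: "real^'n \<Rightarrow> real^'n \<Rightarrow> real^'n"
    and h k :: "(real^'n) set"
    and AdH :: "(real^'n^'n) set"
    and V :: "real^'n^'n"
  assumes "homog_setting br h AdH"
    and "h_subalgebra br h AdH k"
    and "non_toral br h k"
    and "V \<in> W_Sigma br h AdH k"
  shows "filterlim (\<lambda>t. ric_norm br h (gamma V t)) at_top at_top"
proof -
  have la: "lie_algebra br" and adq: "ad_invariant_Q br" and hsa: "lie_subalgebra br h"
    using assms(1) by (auto simp: homog_setting_def)
  have bil: "bilinear br" and alt: "\<And>x. br x x = 0" using la by (auto simp: lie_algebra_def)
  have hsub: "subspace h" using hsa by (simp add: lie_subalgebra_def)
  have ksa: "lie_subalgebra br k" and hk: "h \<subseteq> k" using assms(2) by (auto simp: h_subalgebra_def)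
  have VS: "V \<in> SigmaSet h AdH" and sd: "submersion_dir br h AdH V"
    and WF: "\<And>\<phi>. good_decomp h AdH V \<phi> \<Longrightarrow> span (\<Union>i\<in>I1 h V \<phi>. \<phi>!i) = k \<inter> mspace h"
    using assms(4) by (auto simp: W_Sigma_def)
  obtain \<phi> where gd: "good_decomp h AdH V \<phi>" and SD: "\<And>i j k. i < length \<phi> \<Longrightarrow> j < length \<phi> \<Longrightarrow> k < length \<phi> \<Longrightarrow>
      bracket_coef br \<phi> i j k > 0 \<Longrightarrow> vcoef V (\<phi>!i) - vcoef V (\<phi>!j) - vcoef V (\<phi>!k) + vhat1 h V \<le> 0"
    using sd unfolding submersion_dir_def by blast
  have dec: "decomposition h AdH \<phi>" using gd by (simp add: good_decomp_def)
  define n where "n = length \<phi>"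
  define Bs where "Bs i = (SOME B. onb (\<phi>!i) B)" for i
  have onbB: "onb (\<phi>!i) (Bs i)" if "i < n" for i
  proof -
    have "\<phi>!i \<in> set \<phi>" using that by (simp add: n_def)
    then have "subspace (\<phi>!i)" using dec by (auto simp: decomposition_def adh_irreducible_def)
    then show ?thesis unfolding Bs_def by (rule onb_ex)
  qed
  have finB: "finite (Bs i)" if "i < n" for i using onb_fin[OF onbB[OF that]] .
  have eigc: "V *v x = vcoef V (\<phi>!i) *\<^sub>R x" if "i < n" "x \<in> \<phi>!i" for i x
  proof -
    have "\<exists>c. \<forall>x\<in>\<phi>!i. V *v x = c *\<^sub>R x" using gd that(1) by (simp add: good_decomp_def n_def)
    then have "\<forall>x\<in>\<phi>!i. V *v x = vcoef V (\<phi>!i) *\<^sub>R x" unfolding vcoef_def by (rule someI_ex)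
    then show ?thesis using that(2) by blast
  qed
  have orth: "inner x y = 0" if "i < n" "j < n" "i \<noteq> j" "x \<in> \<phi>!i" "y \<in> \<phi>!j" for i j x y
    using dec that by (auto simp: decomposition_def n_def)
  define E where "E = (\<Union>i\<in>{..<n}. Bs i)"
  define lam where "lam e = inner (V *v e) e" for e
  define EF where "EF = (\<Union>i\<in>I1 h V \<phi>. Bs i)"
  define \<mu> where "\<mu> = vhat1 h V"
  have Bsub: "Bs i \<subseteq> \<phi>!i" if "i < n" for i using onbB[OF that] by (simp add: onb_def)
  have lam_val: "lam e = vcoef V (\<phi>!i)" if "i < n" "e \<in> Bs i" for i e
  proof -
    have "V *v e = vcoef V (\<phi>!i) *\<^sub>R e" using eigc[OF that(1)] Bsub[OF that(1)] that(2) by blast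
    moreover have "inner e e = 1" using onb_on[OF onbB[OF that(1)] that(2) that(2)] by simp
    ultimately show ?thesis by (simp add: lam_def)
  qed
  have spanm: "span (\<Union>(set \<phi>)) = mspace h" using dec by (simp add: decomposition_def)
  have setphi: "\<Union>(set \<phi>) = (\<Union>i\<in>{..<n}. \<phi>!i)"
  proof
    show "\<Union>(set \<phi>) \<subseteq> (\<Union>i\<in>{..<n}. \<phi>!i)" by (auto simp: n_def in_set_conv_nth)
    show "(\<Union>i\<in>{..<n}. \<phi>!i) \<subseteq> \<Union>(set \<phi>)" using nth_mem by (fastforce simp: n_def)
  qed
  have msub: "subspace (mspace h)" by (simp add: mspace_def subspace_orthogonal_comp)
  obtain Eh where Eh: "Eh \<subseteq> h" "pairwise orthogonal Eh" "\<And>x. x \<in> Eh \<Longrightarrow> norm x = 1"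
      "independent Eh" "span Eh = h"
    using orthonormal_basis_subspace[OF hsub] by metis
  have onbEh: "onb h Eh" using Eh by (simp add: onb_def)
  have A1: "bilinear br" "\<And>x. br x x = 0" "ad_invariant_Q br" "subspace h" by (fact bil alt adq hsub)+
  have A2: "finite E" using finB by (simp add: E_def)
  have Espan: "span E = mspace h"
    unfolding E_def spanm[symmetric] setphi
    by (rule span_UN_eq) (use onbB in \<open>auto simp: onb_def\<close>)
  have A4: "E \<subseteq> mspace h" using Espan span_superset by blast
  have A5: "\<And>e f. e \<in> E \<Longrightarrow> f \<in> E \<Longrightarrow> inner e f = (if e = f then 1 else 0)"
  proof -
    fix e f assume "e \<in> E" "f \<in> E"
    then obtain i j where ij: "i < n" "j < n" "e \<in> Bs i" "f \<in> Bs j" by (auto simp: E_def)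
    show "inner e f = (if e = f then 1 else 0)"
    proof (cases "i = j")
      case True
      then show ?thesis using onb_on[OF onbB[OF ij(1)] ij(3)] ij(4) by simp
    next
      case False
      have o: "inner e f = 0" using orth[OF ij(1,2) False] Bsub ij by blast
      have "inner e e = 1" using onb_on[OF onbB[OF ij(1)] ij(3) ij(3)] by simp
      then have "e \<noteq> f" using o by auto
      then show ?thesis using o by simp
    qed
  qed
  have A6: "\<And>e. e \<in> E \<Longrightarrow> V *v e = lam e *\<^sub>R e"
  proof -
    fix e assume "e \<in> E"
    then obtain i where i: "i < n" "e \<in> Bs i" by (auto simp: E_def)
    then have "e \<in> \<phi>!i" using Bsub by blast
    then show "V *v e = lam e *\<^sub>R e" using eigc[OF i(1)] lam_val[OF i] by simp
  qed
  have A7: "finite Eh" using Eh(4) by (rule independent_imp_finite)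
  have A8: "Eh \<subseteq> h" "span Eh = h" by (fact Eh(1) Eh(5))+
  have A9: "\<And>e f. e \<in> Eh \<Longrightarrow> f \<in> Eh \<Longrightarrow> inner e f = (if e = f then 1 else 0)"
    using onb_on[OF onbEh] .
  have A10: "EF \<subseteq> E" by (auto simp: EF_def E_def I1_def n_def)
  have A11: "\<And>e. e \<in> EF \<Longrightarrow> lam e = \<mu>"
  proof -
    fix e assume "e \<in> EF"
    then obtain i where i: "i \<in> I1 h V \<phi>" "e \<in> Bs i" by (auto simp: EF_def)
    then have "i < n" "vcoef V (\<phi>!i) = vhat1 h V" by (auto simp: I1_def n_def)
    then show "lam e = \<mu>" using lam_val[OF \<open>i < n\<close> i(2)] by (simp add: \<mu>_def)
  qed
  have A12: "\<And>a b c. a \<in> E \<Longrightarrow> b \<in> E \<Longrightarrow> c \<in> E \<Longrightarrow> inner (br a b) c \<noteq> 0 \<Longrightarrow>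
             lam a - lam b - lam c + \<mu> \<le> 0"
  proof -
    fix a b c assume abc: "a \<in> E" "b \<in> E" "c \<in> E" "inner (br a b) c \<noteq> 0"
    then obtain i j l where ijl: "i < n" "j < n" "l < n" "a \<in> Bs i" "b \<in> Bs j" "c \<in> Bs l"
      by (auto simp: E_def)
    have bc: "bracket_coef br \<phi> i j l = (\<Sum>a\<in>Bs i. \<Sum>b\<in>Bs j. \<Sum>c\<in>Bs l. (inner (br a b) c)\<^sup>2)"
      by (simp add: bracket_coef_def Bs_def)
    have "0 < (inner (br a b) c)\<^sup>2" using abc(4) by simp
    also have "(inner (br a b) c)\<^sup>2 \<le> (\<Sum>c\<in>Bs l. (inner (br a b) c)\<^sup>2)"
      by (rule member_le_sum[OF ijl(6) _ finB[OF ijl(3)]]) simp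
    also have "\<dots> \<le> (\<Sum>b\<in>Bs j. \<Sum>c\<in>Bs l. (inner (br a b) c)\<^sup>2)"
      by (rule member_le_sum[OF ijl(5) _ finB[OF ijl(2)], where f="\<lambda>b. \<Sum>c\<in>Bs l. (inner (br a b) c)\<^sup>2"])
         (simp add: sum_nonneg)
    also have "\<dots> \<le> (\<Sum>a\<in>Bs i. \<Sum>b\<in>Bs j. \<Sum>c\<in>Bs l. (inner (br a b) c)\<^sup>2)"
      by (rule member_le_sum[OF ijl(4) _ finB[OF ijl(1)], where f="\<lambda>a. \<Sum>b\<in>Bs j. \<Sum>c\<in>Bs l. (inner (br a b) c)\<^sup>2"])
         (simp add: sum_nonneg)
    finally have "bracket_coef br \<phi> i j l > 0" using bc by simp
    then have "vcoef V (\<phi>!i) - vcoef V (\<phi>!j) - vcoef V (\<phi>!l) + vhat1 h V \<le> 0"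
      using SD ijl(1-3) by (simp add: n_def)
    then show "lam a - lam b - lam c + \<mu> \<le> 0"
      using lam_val[OF ijl(1,4)] lam_val[OF ijl(2,5)] lam_val[OF ijl(3,6)] by (simp add: \<mu>_def)
  qed
  interpret S: setting br h V lam E Eh EF \<mu>
    by (rule setting.intro) (fact A1 A2 Espan A4 A5 A6 A7 A8 A9 A10 A11 A12)+
  have kF: "span EF = k \<inter> mspace h"
  proof -
    have "span EF = span (\<Union>i\<in>I1 h V \<phi>. \<phi>!i)"
      unfolding EF_def by (rule span_UN_eq) (use onbB in \<open>auto simp: onb_def I1_def n_def\<close>)
    then show ?thesis using WF[OF gd] by simp
  qed
  obtain e0 where e0: "e0 \<in> EF" "S.L e0 > 0"
    using S.L_pos[OF hsa ksa hk kF assms(3)] by blast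
  have V0: "\<And>x. x \<in> h \<Longrightarrow> V *v x = 0" and tr: "trace V = 0" and tr2: "trace (V ** V) = 1"
    and symV: "transpose V = V"
    using VS by (auto simp: SigmaSet_def)
  obtain e where e: "e \<in> E" "lam e < 0" using S.neg_eig[OF V0 tr tr2] by blast
  have mu_neg: "\<mu> < 0" using S.vhat1_le[OF symV e(1)] e(2) by (simp add: \<mu>_def)
  show ?thesis
  proof (rule filterlim_at_top_mono[OF exp_lin_at_top[OF mu_neg e0(2)]])
    show "\<forall>\<^sub>F t in at_top. exp (- (t * \<mu>)) * S.L e0 \<le> ric_norm br h (gamma V t)"
      using eventually_ge_at_top[of "0::real"] by eventually_elim (rule S.ric_norm_lower[OF e0(1)])
  qed
qed

end
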